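(* For any admissible $F$-weighted boundary stratum $\mathcal{S}$ of genus $g$, the RM-torus $T_\mathcal{S}$ has dimension at most $g-1$.
   Context: $F$ is a totally real number field of degree $g$ with trace pairing $\langle x,y\rangle=\mathrm{Tr}_{F/\mathbb{Q}}(xy)$. For a lattice $\mathcal{I}\subset F$ (rank $g$ additive subgroup), $\mathcal{I}^\vee=\{x\in F:\langle x,y\rangle\in\mathbb{Z}\ \forall y\in\mathcal{I}\}$. An $\mathcal{I}$-weighted stable curve is a stable curve of arithmetic genus $g$ and geometric genus $0$ with an element of $\mathcal{I}$ attached to each branch at each node, such that the two branches at a node have opposite weights, the weights on each component sum to zero, and the weights span $\mathcal{I}$ ("$F$-weighted" = $\mathcal{I}$-weighted for some $\mathcal{I}$). An $F$-weighted boundary stratum $\mathcal{S}$ is the moduli space of weighted stable curves topologically equivalent (weight-preservingly) to a fixed one. $\mathrm{Sym}_{\mathbb{Q}}(F)\subset F\otimes_{\mathbb{Q}}F$ is the subspace of symmetric tensors, $\mathbf{S}_{\mathbb{Q}}(F)$ the quotient of $F\otimes_{\mathbb{Q}}F$ by the span of $x\otimes y-y\otimes x$ (and $\mathbf{S}_{\mathbb{Z}}(\mathcal{I}^\vee)$ the analogous quotient of $\mathcal{I}^\vee\otimes_{\mathbb{Z}}\mathcal{I}^\vee$), dual via $\langle a\otimes b,c\otimes d\rangle=\langle a,c\rangle\langle b,d\rangle$. $N(\mathcal{S})\subset\mathbf{S}_{\mathbb{Q}}(F)$ is the annihilator of the span of $r\otimes r$ over the weights $r$ of $\mathcal{S}$;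 $C(\mathcal{S})=\{x\in\mathbf{S}_{\mathbb{Q}}(F):\langle x,r\otimes r\rangle\ge 0\ \forall\text{ weights } r\}$. $\Lambda^1=\{x\in F\otimes_{\mathbb{Q}}F:\lambda x=x\lambda\ \forall\lambda\in F\}$ (for the natural $F$-bimodule structure), which lies in $\mathrm{Sym}_{\mathbb{Q}}(F)$, and $\mathrm{Ann}(\Lambda^1)\subset\mathbf{S}_{\mathbb{Q}}(F)$ is its annihilator. $\mathcal{S}$ is admissible if $C(\mathcal{S})\cap\mathrm{Ann}(\Lambda^1)\subset N(\mathcal{S})$. The ambient torus is $A_\mathcal{S}=\mathrm{Hom}_{\mathbb{Z}}(N(\mathcal{S})\cap\mathbf{S}_{\mathbb{Z}}(\mathcal{I}^\vee),\mathbb{G}_m)$, $p\colon A_\mathcal{S}\to\mathrm{Hom}(N(\mathcal{S})\cap\mathrm{Ann}(\Lambda^1)\cap\mathbf{S}_{\mathbb{Z}}(\mathcal{I}^\vee),\mathbb{G}_m)$ is the restriction map, and the RM-torus is $T_\mathcal{S}=p^{-1}(1)$, the kernel of $p$. *)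

theory Defs
  imports "HOL-Analysis.Analysis"
begin

definition qspanR :: "real set \<Rightarrow> real set" where
  "qspanR S = {(\<Sum>v\<in>T. real_of_rat (c v) * v) | T c. finite T \<and> T \<subseteq> S}"

definition zspanR :: "real set \<Rightarrow> real set" where
  "zspanR S = {(\<Sum>v\<in>T. real_of_int (c v) * v) | T c. finite T \<and> T \<subseteq> S}"

definition qindepR :: "real set \<Rightarrow> bool" where
  "qindepR S \<longleftrightarrow> (\<forall>T c. finite T \<and> T \<subseteq> S \<and> (\<Sum>v\<in>T. real_of_rat (c v) * v) = 0
                      \<longrightarrow> (\<forall>v\<in>T. c v = 0))"

definition qbasisR :: "real set \<Rightarrow> real set \<Rightarrow> bool" where
  "qbasisR B V \<longleftrightarrow> finite B \<and> B \<subseteq> V \<and> qindepR B \<and> qspanR B = V"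

definition qdimR :: "real set \<Rightarrow> nat" where
  "qdimR V = (if \<exists>B. qbasisR B V then card (SOME B. qbasisR B V) else 0)"

definition subfield_real :: "real set \<Rightarrow> bool" where
  "subfield_real F \<longleftrightarrow> 0 \<in> F \<and> 1 \<in> F \<and> (\<forall>x\<in>F. \<forall>y\<in>F. x + y \<in> F \<and> x * y \<in> F)
     \<and> (\<forall>x\<in>F. - x \<in> F \<and> (x \<noteq> 0 \<longrightarrow> inverse x \<in> F))"

definition number_field :: "real set \<Rightarrow> bool" where
  "number_field F \<longleftrightarrow> subfield_real F \<and> (\<exists>B. qbasisR B F)"

definition field_degree :: "real set \<Rightarrow> nat" where
  "field_degree F = qdimR F"

definition emb :: "real set \<Rightarrow> (real \<Rightarrow> complex) set" where
  "emb F = {\<sigma>. (\<forall>x\<in>F. \<forall>y\<in>F. \<sigma> (x + y) = \<sigma> x + \<sigma> y \<and> \<sigma> (x * y) = \<sigma> x * \<sigma> y)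
               \<and> \<sigma> 1 = 1 \<and> (\<forall>x. x \<notin> F \<longrightarrow> \<sigma> x = 0)}"

definition totally_real :: "real set \<Rightarrow> bool" where
  "totally_real F \<longleftrightarrow> number_field F \<and> (\<forall>\<sigma>\<in>emb F. \<forall>x\<in>F. \<sigma> x \<in> \<real>)"

text \<open>Trace (sum over all complex embeddings; real for totally real F).\<close>
definition tr :: "real set \<Rightarrow> real \<Rightarrow> real" where
  "tr F x = Re (\<Sum>\<sigma>\<in>emb F. \<sigma> x)"

text \<open>A lattice: a rank-g (finitely generated) additive subgroup of F, i.e. the
  Z-span of a Q-basis of F.\<close>
definition is_lattice :: "real set \<Rightarrow> real set \<Rightarrow> bool" where
  "is_lattice F I \<longleftrightarrow> (\<exists>B. qbasisR B F \<and> I = zspanR B)"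

definition dual_lattice :: "real set \<Rightarrow> real set \<Rightarrow> real set" where
  "dual_lattice F I = {x \<in> F. \<forall>y\<in>I. tr F (x * y) \<in> \<int>}"

text \<open>F \<otimes>_Q F is realised (injectively, F being totally real) inside the real
  matrices indexed by pairs of embeddings: a \<otimes> b \<mapsto> (\<sigma>(a) \<tau>(b))_{\<sigma>,\<tau>}.
  Under this model the pairing <a\<otimes>b, c\<otimes>d> = Tr(ac) Tr(bd) is the Frobenius pairing.\<close>

type_synonym tens = "(real \<Rightarrow> complex) \<Rightarrow> (real \<Rightarrow> complex) \<Rightarrow> real"

definition tensor :: "real set \<Rightarrow> real \<Rightarrow> real \<Rightarrow> tens" where
  "tensor F a b = (\<lambda>\<sigma> \<tau>. if \<sigma> \<in> emb F \<and> \<tau> \<in> emb F then Re (\<sigma> a) * Re (\<tau> b) else 0)"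

definition qspanT :: "tens set \<Rightarrow> tens set" where
  "qspanT S = {(\<lambda>\<sigma> \<tau>. \<Sum>v\<in>T. real_of_rat (c v) * v \<sigma> \<tau>) | T c. finite T \<and> T \<subseteq> S}"

definition zspanT :: "tens set \<Rightarrow> tens set" where
  "zspanT S = {(\<lambda>\<sigma> \<tau>. \<Sum>v\<in>T. real_of_int (c v) * v \<sigma> \<tau>) | T c. finite T \<and> T \<subseteq> S}"

definition tensor_space :: "real set \<Rightarrow> tens set" where
  "tensor_space F = qspanT {tensor F a b | a b. a \<in> F \<and> b \<in> F}"

definition pairing :: "real set \<Rightarrow> tens \<Rightarrow> tens \<Rightarrow> real" where
  "pairing F t u = (\<Sum>\<sigma>\<in>emb F. \<Sum>\<tau>\<in>emb F. t \<sigma> \<tau> * u \<sigma> \<tau>)"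

text \<open>F-bimodule structure: \<lambda>(a\<otimes>b) = (\<lambda>a)\<otimes>b, (a\<otimes>b)\<lambda> = a\<otimes>(b\<lambda>).\<close>
definition lmult :: "real set \<Rightarrow> real \<Rightarrow> tens \<Rightarrow> tens" where
  "lmult F l t = (\<lambda>\<sigma> \<tau>. Re (\<sigma> l) * t \<sigma> \<tau>)"

definition rmult :: "real set \<Rightarrow> tens \<Rightarrow> real \<Rightarrow> tens" where
  "rmult F t l = (\<lambda>\<sigma> \<tau>. t \<sigma> \<tau> * Re (\<tau> l))"

definition Sym_Q :: "real set \<Rightarrow> tens set" where
  "Sym_Q F = {t \<in> tensor_space F. \<forall>\<sigma> \<tau>. t \<sigma> \<tau> = t \<tau> \<sigma>}"

definition Lambda1 :: "real set \<Rightarrow> tens set" where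
  "Lambda1 F = {t \<in> tensor_space F. \<forall>l\<in>F. lmult F l t = rmult F t l}"

text \<open>The quotient S_Q(F) = (F\<otimes>F)/<x\<otimes>y - y\<otimes>x> is represented by its isomorphic
  image under symmetrisation [t] \<mapsto> (t + t^T)/2; this is compatible with the
  pairing against Sym_Q(F).\<close>
definition symz :: "tens \<Rightarrow> tens" where
  "symz t = (\<lambda>\<sigma> \<tau>. (t \<sigma> \<tau> + t \<tau> \<sigma>) / 2)"

definition S_Q :: "real set \<Rightarrow> tens set" where
  "S_Q F = symz ` tensor_space F"

definition S_Z :: "real set \<Rightarrow> real set \<Rightarrow> tens set" where
  "S_Z F L = symz ` zspanT {tensor F a b | a b. a \<in> L \<and> b \<in> L}"

definition Ann_Lambda1 :: "real set \<Rightarrow> tens set" where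
  "Ann_Lambda1 F = {x \<in> S_Q F. \<forall>l\<in>Lambda1 F. pairing F x l = 0}"

text \<open>A stable curve of arithmetic genus g and geometric genus 0 without markings
  is encoded by its dual graph: vertices V (components, all rational), half-edges H
  (branches at nodes), vert h = component containing branch h, iota h = the other
  branch of the same node. w h is the weight attached to branch h.\<close>

definition weighted_stable_curve ::
  "real set \<Rightarrow> nat \<Rightarrow> real set \<Rightarrow> 'v set \<Rightarrow> 'h set \<Rightarrow> ('h \<Rightarrow> 'v) \<Rightarrow> ('h \<Rightarrow> 'h) \<Rightarrow> ('h \<Rightarrow> real) \<Rightarrow> bool"
where
  "weighted_stable_curve F g I V H vert iota w \<longleftrightarrow>
     finite V \<and> finite H \<and> V \<noteq> {} \<and>
     (\<forall>h\<in>H. vert h \<in> V \<and> iota h \<in> H \<and> iota h \<noteq> h \<and> iota (iota h) = h) \<and>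
     \<comment> \<open>connected\<close>
     (\<forall>u\<in>V. \<forall>v\<in>V. (u, v) \<in> (\<Union>h\<in>H. {(vert h, vert (iota h))})\<^sup>*) \<and>
     \<comment> \<open>stability: each rational component has at least 3 special points\<close>
     (\<forall>v\<in>V. card {h\<in>H. vert h = v} \<ge> 3) \<and>
     \<comment> \<open>arithmetic genus g = #nodes - #components + 1 (all components rational)\<close>
     card H + 2 = 2 * card V + 2 * g \<and>
     \<comment> \<open>weights\<close>
     (\<forall>h\<in>H. w h \<in> I \<and> w (iota h) = - w h) \<and>
     (\<forall>v\<in>V. (\<Sum>h\<in>{h\<in>H. vert h = v}. w h) = 0) \<and>
     zspanR (w ` H) = I"

definition N_S :: "real set \<Rightarrow> real set \<Rightarrow> tens set" where
  "N_S F R = {x \<in> S_Q F. \<forall>r\<in>R. pairing F x (tensor F r r) = 0}"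

definition C_S :: "real set \<Rightarrow> real set \<Rightarrow> tens set" where
  "C_S F R = {x \<in> S_Q F. \<forall>r\<in>R. pairing F x (tensor F r r) \<ge> 0}"

definition admissible :: "real set \<Rightarrow> real set \<Rightarrow> bool" where
  "admissible F R \<longleftrightarrow> C_S F R \<inter> Ann_Lambda1 F \<subseteq> N_S F R"

definition quot_rank :: "tens set \<Rightarrow> tens set \<Rightarrow> nat" where
  "quot_rank L L' = Sup {card B | B. finite B \<and> B \<subseteq> L \<and>
      (\<forall>c. (\<lambda>\<sigma> \<tau>. \<Sum>b\<in>B. real_of_int (c b) * b \<sigma> \<tau>) \<in> L' \<longrightarrow> (\<forall>b\<in>B. c b = 0))}"

text \<open>T_S = ker(p) = Hom(L/L', G_m) with L = N(S) \<inter> S_Z(I^\<or>) and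
  L' = N(S) \<inter> Ann(\<Lambda>^1) \<inter> S_Z(I^\<or>); its dimension is the rank of its character group L/L'.\<close>
definition RM_torus_dim :: "real set \<Rightarrow> real set \<Rightarrow> real set \<Rightarrow> nat" where
  "RM_torus_dim F I R =
     quot_rank (N_S F R \<inter> S_Z F (dual_lattice F I))
               (N_S F R \<inter> Ann_Lambda1 F \<inter> S_Z F (dual_lattice F I))"

end

theory Submission imports Defs begin


lemma sub_props:
  assumes "subfield_real F"
  shows "0 \<in> F" "1 \<in> F" "\<And>x y. x \<in> F \<Longrightarrow> y \<in> F \<Longrightarrow> x + y \<in> F"
    "\<And>x y. x \<in> F \<Longrightarrow> y \<in> F \<Longrightarrow> x * y \<in> F" "\<And>x. x \<in> F \<Longrightarrow> - x \<in> F"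
    "\<And>x. x \<in> F \<Longrightarrow> x \<noteq> 0 \<Longrightarrow> inverse x \<in> F"
  using assms unfolding subfield_real_def by auto

lemma F_sum:
  assumes "subfield_real F" "\<And>v. v \<in> T \<Longrightarrow> f v \<in> F"
  shows "sum f T \<in> F"
proof (cases "finite T")
  case True
  then show ?thesis using assms(2)
    by (induction T rule: finite_induct) (auto intro: sub_props[OF assms(1)])
next
  case False then show ?thesis using sub_props[OF assms(1)] by simp
qed

lemma F_of_nat: "subfield_real F \<Longrightarrow> real n \<in> F"
  by (induction n) (auto intro: sub_props)

lemma F_of_int: assumes "subfield_real F" shows "real_of_int i \<in> F"
proof (cases "i \<ge> 0")
  case True then show ?thesis using F_of_nat[OF assms, of "nat i"] by simp
next
  case False then show ?thesis using sub_props(5)[OF assms F_of_nat[OF assms, of "nat (-i)"]] by simp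
qed

lemma F_of_rat: assumes "subfield_real F" shows "real_of_rat q \<in> F"
proof (cases q)
  case (Fract a b)
  then have "real_of_rat q = of_int a * inverse (of_int b)" by (simp add: of_rat_rat divide_inverse)
  then show ?thesis using sub_props[OF assms] F_of_int[OF assms] Fract by auto
qed

context
  fixes F \<sigma>
  assumes sf: "subfield_real F" and se: "\<sigma> \<in> emb F"
begin

lemma e_add: "x \<in> F \<Longrightarrow> y \<in> F \<Longrightarrow> \<sigma> (x + y) = \<sigma> x + \<sigma> y"
  and e_mult: "x \<in> F \<Longrightarrow> y \<in> F \<Longrightarrow> \<sigma> (x * y) = \<sigma> x * \<sigma> y"
  and e_one: "\<sigma> 1 = 1" and e_out: "x \<notin> F \<Longrightarrow> \<sigma> x = 0"
  using se unfolding emb_def by auto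

lemma e_zero: "\<sigma> 0 = 0"
  using e_add[of 0 0] sub_props(1)[OF sf] by simp

lemma e_neg: "x \<in> F \<Longrightarrow> \<sigma> (- x) = - \<sigma> x"
  using e_add[of x "-x"] sub_props(5)[OF sf] e_zero by (simp add: eq_neg_iff_add_eq_0 add.commute)

lemma e_inv: "x \<in> F \<Longrightarrow> x \<noteq> 0 \<Longrightarrow> \<sigma> (inverse x) = inverse (\<sigma> x)"
  using e_mult[of x "inverse x"] sub_props(6)[OF sf] e_one
  by (metis inverse_unique right_inverse)

lemma e_nat: "\<sigma> (real n) = of_nat n"
proof (induction n)
  case 0 then show ?case using e_zero by simp
next
  case (Suc n)
  have "\<sigma> (real (Suc n)) = \<sigma> (real n + 1)" by (simp add: add.commute)
  also have "\<dots> = \<sigma> (real n) + \<sigma> 1" using e_add F_of_nat[OF sf] sub_props(2)[OF sf] by blast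
  finally show ?case using Suc e_one by simp
qed

lemma e_int: "\<sigma> (real_of_int i) = of_int i"
proof (cases "i \<ge> 0")
  case True then show ?thesis using e_nat[of "nat i"] by simp
next
  case False then show ?thesis using e_neg[OF F_of_nat[OF sf, of "nat (-i)"]] e_nat[of "nat (-i)"] by simp
qed

lemma e_rat: "\<sigma> (real_of_rat q) = complex_of_real (of_rat q)"
proof (cases q)
  case (Fract a b)
  then have 1: "real_of_rat q = of_int a * inverse (of_int b)" by (simp add: of_rat_rat divide_inverse)
  have "\<sigma> (of_int a * inverse (of_int b)) = \<sigma> (of_int a) * \<sigma> (inverse (of_int b))"
    using e_mult F_of_int[OF sf] sub_props(6)[OF sf] Fract by auto
  also have "\<dots> = of_int a * inverse (of_int b)" using e_int e_inv[OF F_of_int[OF sf]] Fract by simp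
  finally show ?thesis using 1 Fract by (simp add: of_rat_rat divide_inverse)
qed

lemma e_ratmult: "x \<in> F \<Longrightarrow> \<sigma> (real_of_rat q * x) = complex_of_real (of_rat q) * \<sigma> x"
  using e_mult[OF F_of_rat[OF sf] ] e_rat by simp

lemma e_sum: "(\<And>v. v \<in> T \<Longrightarrow> f v \<in> F) \<Longrightarrow> \<sigma> (sum f T) = (\<Sum>v\<in>T. \<sigma> (f v))"
proof (induction T rule: infinite_finite_induct)
  case (infinite A) then show ?case using e_zero by simp
next
  case empty then show ?case using e_zero by simp
next
  case (insert x A)
  have "\<sigma> (f x + sum f A) = \<sigma> (f x) + \<sigma> (sum f A)"
    using insert.prems e_add F_sum[OF sf, of A f] by simp
  then show ?case using insert by simp
qed

end

definition iota0 :: "real set \<Rightarrow> real \<Rightarrow> complex" where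
  "iota0 F = (\<lambda>x. if x \<in> F then complex_of_real x else 0)"

lemma iota0_emb: "subfield_real F \<Longrightarrow> iota0 F \<in> emb F"
  unfolding emb_def iota0_def using sub_props by auto



definition spanG :: "('k::comm_ring_1 \<Rightarrow> real) \<Rightarrow> tens set \<Rightarrow> tens set" where
  "spanG \<phi> S = {(\<lambda>\<sigma> \<tau>. \<Sum>v\<in>T. \<phi> (c v) * v \<sigma> \<tau>) | T c. finite T \<and> T \<subseteq> S}"

lemma spanG_I: "finite T \<Longrightarrow> T \<subseteq> S \<Longrightarrow> x = (\<lambda>\<sigma> \<tau>. \<Sum>v\<in>T. \<phi> (c v) * v \<sigma> \<tau>) \<Longrightarrow> x \<in> spanG \<phi> S"
  unfolding spanG_def by blast

lemma zspanT_G: "zspanT S = spanG (real_of_int) S"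
  unfolding zspanT_def spanG_def by simp
lemma qspanT_G: "qspanT S = spanG (real_of_rat) S"
  unfolding qspanT_def spanG_def by simp

locale hom_phi =
  fixes \<phi> :: "'k::comm_ring_1 \<Rightarrow> real"
  assumes padd: "\<phi> (a + b) = \<phi> a + \<phi> b" and pmult: "\<phi> (a * b) = \<phi> a * \<phi> b"
    and pzero: "\<phi> 0 = 0" and pone: "\<phi> 1 = 1"
begin

lemma spanG_zero: "(\<lambda>\<sigma> \<tau>. 0) \<in> spanG \<phi> S"
  by (rule spanG_I[of "{}"]) auto

lemma spanG_add:
  assumes "x \<in> spanG \<phi> S" "y \<in> spanG \<phi> S"
  shows "(\<lambda>\<sigma> \<tau>. x \<sigma> \<tau> + y \<sigma> \<tau>) \<in> spanG \<phi> S"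
proof -
  obtain T1 c1 where x: "x = (\<lambda>\<sigma> \<tau>. \<Sum>v\<in>T1. \<phi> (c1 v) * v \<sigma> \<tau>)" "finite T1" "T1 \<subseteq> S"
    using assms(1) unfolding spanG_def by auto
  obtain T2 c2 where y: "y = (\<lambda>\<sigma> \<tau>. \<Sum>v\<in>T2. \<phi> (c2 v) * v \<sigma> \<tau>)" "finite T2" "T2 \<subseteq> S"
    using assms(2) unfolding spanG_def by auto
  define c where "c v = (if v \<in> T1 then c1 v else 0) + (if v \<in> T2 then c2 v else 0)" for v
  have "(\<lambda>\<sigma> \<tau>. x \<sigma> \<tau> + y \<sigma> \<tau>) = (\<lambda>\<sigma> \<tau>. \<Sum>v\<in>T1 \<union> T2. \<phi> (c v) * v \<sigma> \<tau>)"
  proof (intro ext)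
    fix \<sigma> \<tau>
    have "(\<Sum>v\<in>T1 \<union> T2. \<phi> (c v) * v \<sigma> \<tau>) =
       (\<Sum>v\<in>T1 \<union> T2. (if v \<in> T1 then \<phi> (c1 v) * v \<sigma> \<tau> else 0)) +
       (\<Sum>v\<in>T1 \<union> T2. (if v \<in> T2 then \<phi> (c2 v) * v \<sigma> \<tau> else 0))"
      unfolding c_def sum.distrib[symmetric] by (rule sum.cong) (auto simp: padd pzero distrib_right)
    also have "\<dots> = (\<Sum>v\<in>T1. \<phi> (c1 v) * v \<sigma> \<tau>) + (\<Sum>v\<in>T2. \<phi> (c2 v) * v \<sigma> \<tau>)"
      using x(2) y(2) by (simp add: sum.inter_restrict[symmetric] Int_absorb1 Int_absorb2 Int_commute)
    finally show "x \<sigma> \<tau> + y \<sigma> \<tau> = (\<Sum>v\<in>T1 \<union> T2. \<phi> (c v) * v \<sigma> \<tau>)" using x y by simp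
  qed
  then show ?thesis unfolding spanG_def using x y by blast
qed

lemma spanG_smul:
  assumes "x \<in> spanG \<phi> S"
  shows "(\<lambda>\<sigma> \<tau>. \<phi> k * x \<sigma> \<tau>) \<in> spanG \<phi> S"
proof -
  obtain T1 c1 where x: "x = (\<lambda>\<sigma> \<tau>. \<Sum>v\<in>T1. \<phi> (c1 v) * v \<sigma> \<tau>)" "finite T1" "T1 \<subseteq> S"
    using assms(1) unfolding spanG_def by auto
  have "(\<lambda>\<sigma> \<tau>. \<phi> k * x \<sigma> \<tau>) = (\<lambda>\<sigma> \<tau>. \<Sum>v\<in>T1. \<phi> (k * c1 v) * v \<sigma> \<tau>)"
    using x by (simp add: pmult sum_distrib_left mult.assoc)
  then show ?thesis using x by (intro spanG_I[of T1 S _ \<phi> "\<lambda>v. k * c1 v"]) auto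
qed

lemma spanG_sum:
  assumes "\<And>b. b \<in> B \<Longrightarrow> Z b \<in> spanG \<phi> S"
  shows "(\<lambda>\<sigma> \<tau>. \<Sum>b\<in>B. \<phi> (k b) * Z b \<sigma> \<tau>) \<in> spanG \<phi> S"
  using assms
proof (induction B rule: infinite_finite_induct)
  case (infinite A) then show ?case using spanG_zero by simp
next
  case empty then show ?case using spanG_zero by simp
next
  case (insert x A)
  have "(\<lambda>\<sigma> \<tau>. \<phi> (k x) * Z x \<sigma> \<tau> + (\<Sum>b\<in>A. \<phi> (k b) * Z b \<sigma> \<tau>)) \<in> spanG \<phi> S"
    by (rule spanG_add[of "\<lambda>\<sigma> \<tau>. \<phi> (k x) * Z x \<sigma> \<tau>" _ "\<lambda>\<sigma> \<tau>. (\<Sum>b\<in>A. \<phi> (k b) * Z b \<sigma> \<tau>)", simplified])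
       (use insert spanG_smul in auto)
  then show ?case using insert by simp
qed

lemma spanG_base: "v \<in> S \<Longrightarrow> v \<in> spanG \<phi> S"
  by (rule spanG_I[of "{v}" _ _ _ "\<lambda>_. 1"]) (auto simp: pone)

end

interpretation hint: hom_phi real_of_int by unfold_locales auto
interpretation hrat: hom_phi real_of_rat by unfold_locales (auto simp: of_rat_add of_rat_mult)

lemma symz_comb: "(\<lambda>\<sigma> \<tau>. \<Sum>b\<in>B. k b * symz (Z b) \<sigma> \<tau>) = symz (\<lambda>\<sigma> \<tau>. \<Sum>b\<in>B. k b * Z b \<sigma> \<tau>)"
  by (simp add: symz_def sum.distrib[symmetric] sum_divide_distrib ring_distribs)



lemma SQ_symz: "x \<in> S_Q F \<Longrightarrow> \<exists>z. z \<in> qspanT {tensor F a b | a b. a \<in> F \<and> b \<in> F} \<and> x = symz z"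
  unfolding S_Q_def tensor_space_def by auto

lemma SQ_comb:
  assumes "\<And>b. b \<in> B \<Longrightarrow> b \<in> S_Q F"
  shows "(\<lambda>\<sigma> \<tau>. \<Sum>b\<in>B. real_of_int (c b) * b \<sigma> \<tau>) \<in> S_Q F"
proof -
  have "\<forall>b\<in>B. \<exists>z. z \<in> qspanT {tensor F a b | a b. a \<in> F \<and> b \<in> F} \<and> b = symz z"
    using SQ_symz assms by blast
  note ch = bchoice[OF this]
  obtain Z where Z: "\<And>b. b \<in> B \<Longrightarrow> Z b \<in> qspanT {tensor F a b | a b. a \<in> F \<and> b \<in> F} \<and> b = symz (Z b)"
    using ch by blast
  have "(\<lambda>\<sigma> \<tau>. \<Sum>b\<in>B. real_of_int (c b) * b \<sigma> \<tau>) = (\<lambda>\<sigma> \<tau>. \<Sum>b\<in>B. real_of_int (c b) * symz (Z b) \<sigma> \<tau>)"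
    using Z by (intro ext sum.cong) auto
  also have "\<dots> = symz (\<lambda>\<sigma> \<tau>. \<Sum>b\<in>B. real_of_rat (of_int (c b)) * Z b \<sigma> \<tau>)"
    by (simp add: symz_comb)
  finally have eq: "(\<lambda>\<sigma> \<tau>. \<Sum>b\<in>B. real_of_int (c b) * b \<sigma> \<tau>) = symz (\<lambda>\<sigma> \<tau>. \<Sum>b\<in>B. real_of_rat (of_int (c b)) * Z b \<sigma> \<tau>)" .
  have mem: "(\<lambda>\<sigma> \<tau>. \<Sum>b\<in>B. real_of_rat (of_int (c b)) * Z b \<sigma> \<tau>) \<in> tensor_space F"
    unfolding tensor_space_def qspanT_G by (rule hrat.spanG_sum) (use Z in \<open>auto simp: qspanT_G\<close>)
  show ?thesis unfolding S_Q_def eq by (rule imageI) (rule mem)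
qed

lemma SZ_comb:
  assumes "\<And>b. b \<in> B \<Longrightarrow> b \<in> S_Z F L"
  shows "(\<lambda>\<sigma> \<tau>. \<Sum>b\<in>B. real_of_int (c b) * b \<sigma> \<tau>) \<in> S_Z F L"
proof -
  have "\<forall>b\<in>B. \<exists>z. z \<in> zspanT {tensor F a b | a b. a \<in> L \<and> b \<in> L} \<and> b = symz z"
    using assms unfolding S_Z_def by blast
  note ch = bchoice[OF this]
  obtain Z where Z: "\<And>b. b \<in> B \<Longrightarrow> Z b \<in> zspanT {tensor F a b | a b. a \<in> L \<and> b \<in> L} \<and> b = symz (Z b)"
    using ch by blast
  have "(\<lambda>\<sigma> \<tau>. \<Sum>b\<in>B. real_of_int (c b) * b \<sigma> \<tau>) = (\<lambda>\<sigma> \<tau>. \<Sum>b\<in>B. real_of_int (c b) * symz (Z b) \<sigma> \<tau>)"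
    using Z by (intro ext sum.cong) auto
  also have "\<dots> = symz (\<lambda>\<sigma> \<tau>. \<Sum>b\<in>B. real_of_int (c b) * Z b \<sigma> \<tau>)"
    by (simp add: symz_comb)
  finally have eq: "(\<lambda>\<sigma> \<tau>. \<Sum>b\<in>B. real_of_int (c b) * b \<sigma> \<tau>) = symz (\<lambda>\<sigma> \<tau>. \<Sum>b\<in>B. real_of_int (c b) * Z b \<sigma> \<tau>)" .
  have mem: "(\<lambda>\<sigma> \<tau>. \<Sum>b\<in>B. real_of_int (c b) * Z b \<sigma> \<tau>) \<in> zspanT {tensor F a b | a b. a \<in> L \<and> b \<in> L}"
    unfolding zspanT_G by (rule hint.spanG_sum) (use Z in \<open>auto simp: zspanT_G\<close>)
  show ?thesis unfolding S_Z_def eq by (rule imageI) (rule mem)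
qed

lemma SQ_add:
  assumes "x \<in> S_Q F" "y \<in> S_Q F"
  shows "(\<lambda>\<sigma> \<tau>. x \<sigma> \<tau> + y \<sigma> \<tau>) \<in> S_Q F"
proof -
  obtain zx where zx: "zx \<in> qspanT {tensor F a b | a b. a \<in> F \<and> b \<in> F}" "x = symz zx" using SQ_symz[OF assms(1)] by blast
  obtain zy where zy: "zy \<in> qspanT {tensor F a b | a b. a \<in> F \<and> b \<in> F}" "y = symz zy" using SQ_symz[OF assms(2)] by blast
  have "(\<lambda>\<sigma> \<tau>. x \<sigma> \<tau> + y \<sigma> \<tau>) = symz (\<lambda>\<sigma> \<tau>. zx \<sigma> \<tau> + zy \<sigma> \<tau>)"
    using zx zy by (auto simp: symz_def add_divide_distrib intro!: ext)
  then show ?thesis unfolding S_Q_def tensor_space_def using hrat.spanG_add zx zy by (auto simp: qspanT_G)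
qed

lemma SQ_smul:
  assumes "x \<in> S_Q F"
  shows "(\<lambda>\<sigma> \<tau>. real_of_int k * x \<sigma> \<tau>) \<in> S_Q F"
proof -
  obtain zx where zx: "zx \<in> qspanT {tensor F a b | a b. a \<in> F \<and> b \<in> F}" "x = symz zx" using SQ_symz[OF assms(1)] by blast
  have "(\<lambda>\<sigma> \<tau>. real_of_int k * x \<sigma> \<tau>) = symz (\<lambda>\<sigma> \<tau>. real_of_rat (of_int k) * zx \<sigma> \<tau>)"
    using zx by (auto simp: symz_def ring_distribs intro!: ext)
  moreover have "(\<lambda>\<sigma> \<tau>. real_of_rat (of_int k) * zx \<sigma> \<tau>) \<in> tensor_space F"
    unfolding tensor_space_def qspanT_G by (rule hrat.spanG_smul) (use zx in \<open>simp add: qspanT_G\<close>)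
  ultimately show ?thesis unfolding S_Q_def by simp
qed

lemma SQ_tensor: assumes r: "r \<in> F" shows "tensor F r r \<in> S_Q F"
proof -
  have mem: "tensor F r r \<in> tensor_space F"
    unfolding tensor_space_def qspanT_G by (rule hrat.spanG_base) (use r in auto)
  have eq: "symz (tensor F r r) = tensor F r r"
    by (auto simp: symz_def tensor_def intro!: ext)
  show ?thesis unfolding S_Q_def using imageI[OF mem, of symz] eq by simp
qed

lemma pairing_comb:
  "pairing F (\<lambda>\<sigma> \<tau>. \<Sum>b\<in>B. k b * b \<sigma> \<tau>) u = (\<Sum>b\<in>B. k b * pairing F b u)"
proof -
  have "pairing F (\<lambda>\<sigma> \<tau>. \<Sum>b\<in>B. k b * b \<sigma> \<tau>) u =
    (\<Sum>\<sigma>\<in>emb F. \<Sum>\<tau>\<in>emb F. \<Sum>b\<in>B. k b * (b \<sigma> \<tau> * u \<sigma> \<tau>))"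
    unfolding pairing_def by (simp add: sum_distrib_right mult.assoc)
  also have "\<dots> = (\<Sum>\<sigma>\<in>emb F. \<Sum>b\<in>B. \<Sum>\<tau>\<in>emb F. k b * (b \<sigma> \<tau> * u \<sigma> \<tau>))"
    by (rule sum.cong[OF refl], rule sum.swap)
  also have "\<dots> = (\<Sum>b\<in>B. \<Sum>\<sigma>\<in>emb F. \<Sum>\<tau>\<in>emb F. k b * (b \<sigma> \<tau> * u \<sigma> \<tau>))"
    by (rule sum.swap)
  also have "\<dots> = (\<Sum>b\<in>B. k b * pairing F b u)"
    unfolding pairing_def by (simp add: sum_distrib_left)
  finally show ?thesis .
qed

lemma pairing_add:
  "pairing F (\<lambda>\<sigma> \<tau>. x \<sigma> \<tau> + y \<sigma> \<tau>) u = pairing F x u + pairing F y u"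
  unfolding pairing_def by (simp add: distrib_right sum.distrib)

lemma pairing_smul:
  "pairing F (\<lambda>\<sigma> \<tau>. k * x \<sigma> \<tau>) u = k * pairing F x u"
  unfolding pairing_def by (simp add: sum_distrib_left mult.assoc)

lemma pairing_tt:
  "pairing F (tensor F r r) (tensor F s s) = (\<Sum>\<sigma>\<in>emb F. Re (\<sigma> r) * Re (\<sigma> s))^2"
proof -
  have "pairing F (tensor F r r) (tensor F s s) =
     (\<Sum>\<sigma>\<in>emb F. \<Sum>\<tau>\<in>emb F. (Re (\<sigma> r) * Re (\<sigma> s)) * (Re (\<tau> r) * Re (\<tau> s)))"
    unfolding pairing_def tensor_def by (intro sum.cong refl) (simp add: algebra_simps)
  also have "\<dots> = (\<Sum>\<sigma>\<in>emb F. Re (\<sigma> r) * Re (\<sigma> s)) * (\<Sum>\<tau>\<in>emb F. Re (\<tau> r) * Re (\<tau> s))"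
    by (simp add: sum_product)
  finally show ?thesis by (simp add: power2_eq_square)
qed

lemma pairing_tt_nonneg: "pairing F (tensor F r r) (tensor F s s) \<ge> 0"
  by (simp add: pairing_tt)

lemma pairing_tt_pos:
  assumes "subfield_real F" "finite (emb F)" "r \<in> F" "r \<noteq> 0"
  shows "pairing F (tensor F r r) (tensor F r r) > 0"
proof -
  have le: "Re (iota0 F r) * Re (iota0 F r) \<le> (\<Sum>\<sigma>\<in>emb F. Re (\<sigma> r) * Re (\<sigma> r))"
    by (rule member_le_sum) (use assms iota0_emb in auto)
  have rr: "0 < r * r" using assms(4) by (metis not_real_square_gt_zero)
  moreover have "Re (iota0 F r) * Re (iota0 F r) = r * r" using assms(3) by (simp add: iota0_def)
  ultimately have "0 < (\<Sum>\<sigma>\<in>emb F. Re (\<sigma> r) * Re (\<sigma> r))" using le by linarith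
  then show ?thesis unfolding pairing_tt by simp
qed

lemma pairing_inf: "infinite (emb F) \<Longrightarrow> pairing F x y = 0"
  unfolding pairing_def by simp



lemma tr_sub: "totally_real F \<Longrightarrow> subfield_real F"
  unfolding totally_real_def number_field_def by auto
lemma tr_real: "totally_real F \<Longrightarrow> \<sigma> \<in> emb F \<Longrightarrow> x \<in> F \<Longrightarrow> Im (\<sigma> x) = 0"
  unfolding totally_real_def using complex_is_Real_iff by blast

lemma diag_gen:
  assumes tr: "totally_real F" and v: "v \<in> {tensor F a b | a b. a \<in> F \<and> b \<in> F}" and s: "\<sigma> \<in> emb F"
  shows "v (iota0 F) (iota0 F) \<in> F \<and> v \<sigma> \<sigma> = Re (\<sigma> (v (iota0 F) (iota0 F)))"
proof -
  have sf: "subfield_real F" using tr by (rule tr_sub)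
  obtain a b where ab: "a \<in> F" "b \<in> F" "v = tensor F a b" using v by blast
  have i: "iota0 F \<in> emb F" using iota0_emb[OF sf] .
  have 1: "v (iota0 F) (iota0 F) = a * b" using ab i by (simp add: tensor_def iota0_def)
  have "\<sigma> (a * b) = \<sigma> a * \<sigma> b" using e_mult[OF sf s ab(1,2)] .
  then have "Re (\<sigma> (a * b)) = Re (\<sigma> a) * Re (\<sigma> b)" using tr_real[OF tr s ab(1)] tr_real[OF tr s ab(2)] by simp
  then show ?thesis using 1 ab s sub_props(4)[OF sf ab(1,2)] by (simp add: tensor_def)
qed

lemma diag_TS:
  assumes tr: "totally_real F" and z: "z \<in> tensor_space F" and s: "\<sigma> \<in> emb F"
  shows "z (iota0 F) (iota0 F) \<in> F \<and> z \<sigma> \<sigma> = Re (\<sigma> (z (iota0 F) (iota0 F)))"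
proof -
  have sf: "subfield_real F" using tr by (rule tr_sub)
  obtain T c where Tc: "z = (\<lambda>\<sigma> \<tau>. \<Sum>v\<in>T. real_of_rat (c v) * v \<sigma> \<tau>)" "finite T"
     "T \<subseteq> {tensor F a b | a b. a \<in> F \<and> b \<in> F}"
    using z unfolding tensor_space_def qspanT_def by blast
  have dv: "\<And>v. v \<in> T \<Longrightarrow> v (iota0 F) (iota0 F) \<in> F \<and> v \<sigma> \<sigma> = Re (\<sigma> (v (iota0 F) (iota0 F)))"
    using diag_gen[OF tr _ s] Tc(3) by blast
  have inF: "\<And>v. v \<in> T \<Longrightarrow> real_of_rat (c v) * v (iota0 F) (iota0 F) \<in> F"
    using dv sub_props(4)[OF sf] F_of_rat[OF sf] by blast
  have zi: "z (iota0 F) (iota0 F) = (\<Sum>v\<in>T. real_of_rat (c v) * v (iota0 F) (iota0 F))" using Tc by simp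
  have 1: "z (iota0 F) (iota0 F) \<in> F" unfolding zi by (rule F_sum[OF sf inF])
  have "\<sigma> (z (iota0 F) (iota0 F)) = (\<Sum>v\<in>T. \<sigma> (real_of_rat (c v) * v (iota0 F) (iota0 F)))"
    unfolding zi by (rule e_sum[OF sf s inF])
  also have "\<dots> = (\<Sum>v\<in>T. complex_of_real (real_of_rat (c v)) * \<sigma> (v (iota0 F) (iota0 F)))"
    by (rule sum.cong[OF refl]) (use e_ratmult[OF sf s] dv in blast)
  finally have "Re (\<sigma> (z (iota0 F) (iota0 F))) = (\<Sum>v\<in>T. real_of_rat (c v) * v \<sigma> \<sigma>)"
    using dv by simp
  then show ?thesis using 1 Tc(1) by simp
qed

lemma diag_SQ:
  assumes tr: "totally_real F" and x: "x \<in> S_Q F" and s: "\<sigma> \<in> emb F"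
  shows "x (iota0 F) (iota0 F) \<in> F \<and> x \<sigma> \<sigma> = Re (\<sigma> (x (iota0 F) (iota0 F)))"
proof -
  obtain z where z: "z \<in> tensor_space F" "x = symz z" using x unfolding S_Q_def by blast
  show ?thesis using diag_TS[OF tr z(1) s] z(2) by (simp add: symz_def)
qed

lemma offdiag:
  assumes tr: "totally_real F" and l: "l \<in> Lambda1 F" and s: "\<sigma> \<in> emb F" "\<tau> \<in> emb F" "\<sigma> \<noteq> \<tau>"
  shows "l \<sigma> \<tau> = 0"
proof -
  obtain x where x: "\<sigma> x \<noteq> \<tau> x" using s(3) by blast
  have xF: "x \<in> F"
  proof (rule ccontr)
    assume "x \<notin> F" then show False using x s(1,2) unfolding emb_def by auto
  qed
  have "Re (\<sigma> x) \<noteq> Re (\<tau> x)" using x tr_real[OF tr s(1) xF] tr_real[OF tr s(2) xF]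
    by (simp add: complex_eq_iff)
  moreover have "lmult F x l \<sigma> \<tau> = rmult F l x \<sigma> \<tau>" using l xF unfolding Lambda1_def by auto
  then have "(Re (\<sigma> x) - Re (\<tau> x)) * l \<sigma> \<tau> = 0" unfolding lmult_def rmult_def by (simp add: algebra_simps)
  ultimately show ?thesis by simp
qed

lemma ker_Ann:
  assumes tr: "totally_real F" and x: "x \<in> S_Q F" and z: "x (iota0 F) (iota0 F) = 0"
  shows "x \<in> Ann_Lambda1 F"
proof -
  have sf: "subfield_real F" using tr by (rule tr_sub)
  have "pairing F x l = 0" if l: "l \<in> Lambda1 F" for l
    unfolding pairing_def
  proof (intro sum.neutral ballI)
    fix \<sigma> \<tau> assume s: "\<sigma> \<in> emb F" "\<tau> \<in> emb F"
    show "x \<sigma> \<tau> * l \<sigma> \<tau> = 0"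
    proof (cases "\<sigma> = \<tau>")
      case True
      then show ?thesis using diag_SQ[OF tr x s(1)] z e_zero[OF sf s(1)] by simp
    next
      case False then show ?thesis using offdiag[OF tr l s False] by simp
    qed
  qed
  then show ?thesis using x unfolding Ann_Lambda1_def by blast
qed



interpretation Qv: vector_space "\<lambda>(q::rat) (x::real). real_of_rat q * x"
  by unfold_locales (auto simp: algebra_simps of_rat_add of_rat_mult)

lemma qspan_sub: "qspanR Bs \<subseteq> Qv.span Bs"
proof
  fix x assume "x \<in> qspanR Bs"
  then obtain T c where Tc: "x = (\<Sum>v\<in>T. real_of_rat (c v) * v)" "finite T" "T \<subseteq> Bs"
    unfolding qspanR_def by blast
  show "x \<in> Qv.span Bs" unfolding Tc(1)
    by (rule Qv.span_sum, rule Qv.span_scale, rule Qv.span_base) (use Tc(3) in blast)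
qed

lemma family_dep:
  fixes f :: "'j \<Rightarrow> real"
  assumes fin: "finite Bs" "finite J" and cd: "card J > card Bs" and fs: "\<forall>j\<in>J. f j \<in> qspanR Bs"
  shows "\<exists>d. (\<Sum>j\<in>J. real_of_rat (d j) * f j) = 0 \<and> (\<exists>j\<in>J. d j \<noteq> 0)"
proof (cases "inj_on f J")
  case False
  then obtain j1 j2 where j: "j1 \<in> J" "j2 \<in> J" "j1 \<noteq> j2" "f j1 = f j2"
    unfolding inj_on_def by blast
  define d where "d j = (if j = j1 then 1 else if j = j2 then -1 else (0::rat))" for j
  have "(\<Sum>j\<in>J. real_of_rat (d j) * f j) = (\<Sum>j\<in>J. (if j = j1 then f j1 else 0) + (if j = j2 then - f j2 else 0))"
    by (rule sum.cong) (use j in \<open>auto simp: d_def\<close>)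
  also have "\<dots> = 0" using j fin by (simp add: sum.distrib)
  finally show ?thesis using j by (intro exI[of _ d]) (auto simp: d_def)
next
  case True
  have "\<not> Qv.independent (f ` J)"
  proof
    assume "Qv.independent (f ` J)"
    moreover have "f ` J \<subseteq> Qv.span Bs" using fs qspan_sub by blast
    ultimately have "card (f ` J) \<le> card Bs" using Qv.independent_span_bound[OF fin(1)] by blast
    then show False using card_image[OF True] cd by simp
  qed
  then obtain t u where tu: "finite t" "t \<subseteq> f ` J" "(\<Sum>v\<in>t. real_of_rat (u v) * v) = 0" "\<exists>v\<in>t. u v \<noteq> 0"
    unfolding Qv.dependent_explicit by blast
  define d where "d j = (if f j \<in> t then u (f j) else 0)" for j
  define J' where "J' = {j \<in> J. f j \<in> t}"
  have fJ: "f ` J' = t" using tu(2) unfolding J'_def by blast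
  have ij: "inj_on f J'" using True unfolding J'_def by (rule inj_on_subset) blast
  have "(\<Sum>j\<in>J. real_of_rat (d j) * f j) = (\<Sum>j\<in>J. if f j \<in> t then real_of_rat (u (f j)) * f j else 0)"
    by (rule sum.cong) (auto simp: d_def)
  also have "\<dots> = (\<Sum>j\<in>J'. real_of_rat (u (f j)) * f j)"
    unfolding J'_def using fin(2) by (simp add: sum.inter_filter)
  also have "\<dots> = (\<Sum>v\<in>t. real_of_rat (u v) * v)"
    unfolding fJ[symmetric] by (simp add: sum.reindex[OF ij])
  finally have s0: "(\<Sum>j\<in>J. real_of_rat (d j) * f j) = 0" using tu(3) by simp
  obtain v where v: "v \<in> t" "u v \<noteq> 0" using tu(4) by blast
  then obtain j where "j \<in> J" "f j = v" using tu(2) by blast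
  then have "d j \<noteq> 0" using v by (simp add: d_def)
  then show ?thesis using s0 \<open>j \<in> J\<close> by blast
qed

lemma common_denom:
  fixes d :: "'a \<Rightarrow> rat"
  assumes "finite A"
  shows "\<exists>m::int. m > 0 \<and> (\<forall>a\<in>A. \<exists>k::int. of_int m * d a = of_int k)"
  using assms
proof (induction A rule: finite_induct)
  case empty then show ?case by (intro exI[of _ 1]) auto
next
  case (insert x A)
  then obtain m where m: "m > 0" "\<forall>a\<in>A. \<exists>k::int. of_int m * d a = of_int k" by blast
  obtain p q where pq: "d x = Fract p q" "q > 0" by (cases "d x") auto
  have dx: "d x = of_int p / of_int q" using pq by (simp add: Fract_of_int_quotient)
  have "\<forall>a\<in>insert x A. \<exists>k::int. of_int (m * q) * d a = of_int k"
  proof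
    fix a assume "a \<in> insert x A"
    then show "\<exists>k::int. of_int (m * q) * d a = of_int k"
    proof
      assume "a = x"
      then show ?thesis using pq(2) dx by (intro exI[of _ "m * p"]) simp
    next
      assume "a \<in> A"
      then obtain k where "of_int m * d a = of_int k" using m by blast
      then show ?thesis by (intro exI[of _ "q * k"]) (simp add: algebra_simps)
    qed
  qed
  then show ?case using m pq by (intro exI[of _ "m * q"]) auto
qed



lemma comb_L:
  assumes "\<And>b. b \<in> B \<Longrightarrow> b \<in> N_S F R \<inter> S_Z F Dl"
  shows "(\<lambda>\<sigma> \<tau>. \<Sum>b\<in>B. real_of_int (c b) * b \<sigma> \<tau>) \<in> N_S F R \<inter> S_Z F Dl"
proof -
  have sq: "(\<lambda>\<sigma> \<tau>. \<Sum>b\<in>B. real_of_int (c b) * b \<sigma> \<tau>) \<in> S_Q F"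
    by (rule SQ_comb) (use assms in \<open>auto simp: N_S_def\<close>)
  have sz: "(\<lambda>\<sigma> \<tau>. \<Sum>b\<in>B. real_of_int (c b) * b \<sigma> \<tau>) \<in> S_Z F Dl"
    by (rule SZ_comb) (use assms in auto)
  have "pairing F (\<lambda>\<sigma> \<tau>. \<Sum>b\<in>B. real_of_int (c b) * b \<sigma> \<tau>) (tensor F r r) = 0" if "r \<in> R" for r
    unfolding pairing_comb using assms that by (simp add: N_S_def)
  then show ?thesis using sq sz unfolding N_S_def by blast
qed

lemma main_bound:
  assumes tr: "totally_real F" and qb: "finite Bs" "qspanR Bs = F"
    and r: "r \<in> R" "r \<in> F" "r \<noteq> 0"
    and adm: "admissible F R"
    and B: "finite B" "B \<subseteq> N_S F R \<inter> S_Z F Dl"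
    and ind: "\<forall>c. (\<lambda>\<sigma> \<tau>. \<Sum>b\<in>B. real_of_int (c b) * b \<sigma> \<tau>) \<in> N_S F R \<inter> Ann_Lambda1 F \<inter> S_Z F Dl
               \<longrightarrow> (\<forall>b\<in>B. c b = 0)"
  shows "card B \<le> card Bs - 1"
proof (cases "finite (emb F)")
  case False
  show ?thesis
  proof (cases "B = {}")
    case True then show ?thesis by simp
  next
    case ne: False
    define y where "y = (\<lambda>\<sigma> \<tau>. \<Sum>b\<in>B. real_of_int ((\<lambda>_. 1::int) b) * b \<sigma> \<tau>)"
    have yL: "y \<in> N_S F R \<inter> S_Z F Dl" unfolding y_def by (rule comb_L) (use B in auto)
    then have yA: "y \<in> Ann_Lambda1 F" unfolding Ann_Lambda1_def N_S_def using pairing_inf[OF False] by simp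
    have "\<forall>b\<in>B. (1::int) = 0"
      using spec[OF ind, of "\<lambda>_. 1"] yL yA by (simp add: y_def)
    then show ?thesis using ne by auto
  qed
next
  case fe: True
  have sf: "subfield_real F" using tr by (rule tr_sub)
  let ?i = "iota0 F"
  have iemb: "?i \<in> emb F" by (rule iota0_emb[OF sf])
  have BSQ: "\<And>b. b \<in> B \<Longrightarrow> b \<in> S_Q F" using B unfolding N_S_def by blast
  show ?thesis
  proof (rule ccontr)
    assume "\<not> card B \<le> card Bs - 1"
    then have cB: "card B \<ge> card Bs" by simp
    define J where "J = insert None (Some ` B)"
    define f where "f j = (case j of None \<Rightarrow> r * r | Some b \<Rightarrow> b ?i ?i)" for j
    have finJ: "finite J" using B(1) unfolding J_def by simp
    have cJ: "card J = card B + 1" unfolding J_def using B(1)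
      by (simp add: card_image)
    have fF: "\<forall>j\<in>J. f j \<in> qspanR Bs"
      unfolding qb(2) J_def f_def using diag_SQ[OF tr BSQ iemb] sub_props(4)[OF sf r(2) r(2)] by auto
    obtain d where d: "(\<Sum>j\<in>J. real_of_rat (d j) * f j) = 0" "\<exists>j\<in>J. d j \<noteq> 0"
      using family_dep[OF qb(1) finJ _ fF] cJ cB by fastforce
    obtain m where m: "m > 0" "\<forall>j\<in>J. \<exists>k::int. of_int m * d j = of_int k"
      using common_denom[OF finJ] by blast
    obtain K where K: "\<And>j. j \<in> J \<Longrightarrow> of_int m * d j = of_int (K j)"
      using bchoice[OF m(2)] by blast
    have Kr: "real_of_int (K j) = real_of_int m * real_of_rat (d j)" if "j \<in> J" for j
    proof -
      have "real_of_rat (of_int m * d j) = real_of_rat (of_int (K j))" using K[OF that] by simp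
      then show ?thesis by (simp add: of_rat_mult)
    qed
    have Ksum: "(\<Sum>j\<in>J. real_of_int (K j) * f j) = 0"
    proof -
      have "(\<Sum>j\<in>J. real_of_int (K j) * f j) = real_of_int m * (\<Sum>j\<in>J. real_of_rat (d j) * f j)"
        by (simp add: sum_distrib_left Kr mult.assoc cong: sum.cong)
      then show ?thesis using d(1) by simp
    qed
    have Knz: "\<exists>j\<in>J. K j \<noteq> 0"
    proof -
      obtain j where j: "j \<in> J" "d j \<noteq> 0" using d(2) by blast
      then have "real_of_int (K j) \<noteq> 0" using Kr[OF j(1)] m(1) by simp
      then show ?thesis using j by auto
    qed
    have split: "(\<Sum>j\<in>J. g j) = g None + (\<Sum>b\<in>B. g (Some b))" for g :: "tens option \<Rightarrow> real"
      unfolding J_def using B(1) by (simp add: sum.reindex)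
    define s where "s = (if K None < 0 then -1 else (1::int))"
    define e0 where "e0 = s * K None"
    define e where "e b = s * K (Some b)" for b
    have e0nn: "e0 \<ge> 0" unfolding e0_def s_def by simp
    have eq: "real_of_int e0 * (r * r) + (\<Sum>b\<in>B. real_of_int (e b) * b ?i ?i) = 0"
    proof -
      have "real_of_int e0 * (r * r) + (\<Sum>b\<in>B. real_of_int (e b) * b ?i ?i)
         = real_of_int s * (\<Sum>j\<in>J. real_of_int (K j) * f j)"
        unfolding split by (simp add: e0_def e_def f_def sum_distrib_left algebra_simps)
      then show ?thesis using Ksum by simp
    qed
    have enz: "e0 \<noteq> 0 \<or> (\<exists>b\<in>B. e b \<noteq> 0)"
      using Knz unfolding J_def e0_def e_def s_def by auto
    define y where "y = (\<lambda>\<sigma> \<tau>. \<Sum>b\<in>B. real_of_int (e b) * b \<sigma> \<tau>)"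
    have yL: "y \<in> N_S F R \<inter> S_Z F Dl" unfolding y_def by (rule comb_L) (use B in auto)
    have ySQ: "y \<in> S_Q F" using yL unfolding N_S_def by blast
    have yi: "y ?i ?i = - (real_of_int e0 * (r * r))" using eq unfolding y_def by simp
    show False
    proof (cases "e0 = 0")
      case True
      have "y \<in> Ann_Lambda1 F" by (rule ker_Ann[OF tr ySQ]) (use yi True in simp)
      then have "\<forall>b\<in>B. e b = 0" using ind yL unfolding y_def by blast
      then show False using enz True by blast
    next
      case False
      then have e0p: "e0 > 0" using e0nn by simp
      define a where "a = (\<lambda>\<sigma> \<tau>. real_of_int e0 * tensor F r r \<sigma> \<tau> + y \<sigma> \<tau>)"
      have aSQ: "a \<in> S_Q F" unfolding a_def
        by (rule SQ_add[OF SQ_smul[OF SQ_tensor[OF r(2)]] ySQ])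
      have tii: "tensor F r r ?i ?i = r * r" using iemb r(2) by (simp add: tensor_def iota0_def)
      have "a \<in> Ann_Lambda1 F" by (rule ker_Ann[OF tr aSQ]) (simp add: a_def tii yi)
      moreover have "a \<in> C_S F R"
        unfolding C_S_def
      proof (intro CollectI conjI ballI aSQ)
        fix s assume "s \<in> R"
        then have "pairing F y (tensor F s s) = 0" using yL unfolding N_S_def by blast
        then show "pairing F a (tensor F s s) \<ge> 0"
          unfolding a_def pairing_add pairing_smul using e0p pairing_tt_nonneg[of F r s] by simp
      qed
      ultimately have "a \<in> N_S F R" using adm unfolding admissible_def by blast
      then have "pairing F a (tensor F r r) = 0" using r(1) unfolding N_S_def by blast
      moreover have "pairing F y (tensor F r r) = 0" using yL r(1) unfolding N_S_def by blast
      ultimately have "real_of_int e0 * pairing F (tensor F r r) (tensor F r r) = 0"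
        unfolding a_def pairing_add pairing_smul by simp
      then show False using e0p pairing_tt_pos[OF sf fe r(2) r(3)] by simp
    qed
  qed
qed



lemma zspan_zero: "(\<forall>v\<in>S. v = 0) \<Longrightarrow> zspanR S \<subseteq> {0}"
  unfolding zspanR_def by (auto intro!: sum.neutral)
lemma qspan_zero: "(\<forall>v\<in>S. v = 0) \<Longrightarrow> qspanR S \<subseteq> {0}"
  unfolding qspanR_def by (auto intro!: sum.neutral)
lemma zspan_base: "v \<in> S \<Longrightarrow> v \<in> zspanR S"
  unfolding zspanR_def by (rule CollectI, rule exI[of _ "{v}"], rule exI[of _ "\<lambda>_. 1"]) auto
lemma zspan_F: assumes "subfield_real F" "S \<subseteq> F" shows "zspanR S \<subseteq> F"
proof
  fix x assume "x \<in> zspanR S"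
  then obtain T c where T: "x = (\<Sum>v\<in>T. real_of_int (c v) * v)" "T \<subseteq> S" unfolding zspanR_def by blast
  have "\<And>v. v \<in> T \<Longrightarrow> real_of_int (c v) * v \<in> F"
    using T(2) assms(2) sub_props(4)[OF assms(1)] F_of_int[OF assms(1)] by blast
  then show "x \<in> F" unfolding T(1) by (rule F_sum[OF assms(1)])
qed

theorem proposition3p4:
  fixes F :: "real set" and g :: nat and I :: "real set"
    and V :: "'v set" and H :: "'h set" and vert :: "'h \<Rightarrow> 'v"
    and iota :: "'h \<Rightarrow> 'h" and w :: "'h \<Rightarrow> real"
  assumes "totally_real F"
    and "field_degree F = g"
    and "is_lattice F I"
    and "weighted_stable_curve F g I V H vert iota w"
    and "admissible F (w ` H)"
  shows "RM_torus_dim F I (w ` H) \<le> g - 1"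
proof -
  have tr: "totally_real F" by fact
  have sf: "subfield_real F" using tr by (rule tr_sub)
  have ex: "\<exists>B. qbasisR B F" using tr unfolding totally_real_def number_field_def by blast
  define Bs where "Bs = (SOME B. qbasisR B F)"
  have qb: "qbasisR Bs F" unfolding Bs_def using someI_ex[OF ex] .
  have g: "g = card Bs" using assms(2) ex unfolding field_degree_def qdimR_def Bs_def by simp
  obtain Bl where Bl: "qbasisR Bl F" "I = zspanR Bl" using assms(3) unfolding is_lattice_def by blast
  have IF: "I \<subseteq> F" unfolding Bl(2) by (rule zspan_F[OF sf]) (use Bl(1) in \<open>simp add: qbasisR_def\<close>)
  have "\<exists>v\<in>Bl. v \<noteq> 0"
  proof (rule ccontr)
    assume "\<not> (\<exists>v\<in>Bl. v \<noteq> 0)"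
    then have "qspanR Bl \<subseteq> {0}" using qspan_zero by blast
    then show False using Bl(1) sub_props(2)[OF sf] unfolding qbasisR_def by auto
  qed
  then obtain v where v: "v \<in> Bl" "v \<noteq> 0" by blast
  have vI: "v \<in> I" unfolding Bl(2) by (rule zspan_base[OF v(1)])
  have wsc: "\<forall>h\<in>H. w h \<in> I" "zspanR (w ` H) = I" using assms(4) unfolding weighted_stable_curve_def by auto
  have "\<exists>h\<in>H. w h \<noteq> 0"
  proof (rule ccontr)
    assume "\<not> (\<exists>h\<in>H. w h \<noteq> 0)"
    then have "zspanR (w ` H) \<subseteq> {0}" using zspan_zero by blast
    then show False using vI v(2) wsc(2) by auto
  qed
  then obtain h0 where h0: "h0 \<in> H" "w h0 \<noteq> 0" by blast
  have rF: "w h0 \<in> F" using wsc(1) h0(1) IF by blast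
  show ?thesis
    unfolding RM_torus_dim_def quot_rank_def
  proof (rule cSup_least)
    show "{card B |B. finite B \<and> B \<subseteq> N_S F (w ` H) \<inter> S_Z F (dual_lattice F I) \<and>
          (\<forall>c. (\<lambda>\<sigma> \<tau>. \<Sum>b\<in>B. real_of_int (c b) * b \<sigma> \<tau>)
               \<in> N_S F (w ` H) \<inter> Ann_Lambda1 F \<inter> S_Z F (dual_lattice F I) \<longrightarrow>
               (\<forall>b\<in>B. c b = 0))} \<noteq> {}" (is "?S \<noteq> {}")
    proof -
      have mem: "card {} \<in> ?S" by (rule CollectI, rule exI[of _ "{}"]) simp
      show ?thesis
      proof
        assume "?S = {}"
        then show False using equals0D mem by metis
      qed
    qed
  next
    fix x assume "x \<in> {card B |B. finite B \<and> B \<subseteq> N_S F (w ` H) \<inter> S_Z F (dual_lattice F I) \<and>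
          (\<forall>c. (\<lambda>\<sigma> \<tau>. \<Sum>b\<in>B. real_of_int (c b) * b \<sigma> \<tau>)
               \<in> N_S F (w ` H) \<inter> Ann_Lambda1 F \<inter> S_Z F (dual_lattice F I) \<longrightarrow>
               (\<forall>b\<in>B. c b = 0))}"
    then obtain B where B: "x = card B" "finite B" "B \<subseteq> N_S F (w ` H) \<inter> S_Z F (dual_lattice F I)"
      "\<forall>c. (\<lambda>\<sigma> \<tau>. \<Sum>b\<in>B. real_of_int (c b) * b \<sigma> \<tau>)
               \<in> N_S F (w ` H) \<inter> Ann_Lambda1 F \<inter> S_Z F (dual_lattice F I) \<longrightarrow>
               (\<forall>b\<in>B. c b = 0)" unfolding mem_Collect_eq by (elim exE conjE) (rule that)
    have q1: "finite Bs" "qspanR Bs = F" using qb unfolding qbasisR_def by blast+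
    have q2: "w h0 \<in> w ` H" using h0(1) by (rule imageI)
    have "card B \<le> card Bs - 1"
      by (rule main_bound[OF tr q1 q2 rF h0(2) assms(5) B(2) B(3) B(4)])
    then show "x \<le> g - 1" using B(1) g by simp
  qed
qed

end
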